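(* Let $L$ be a geometric lattice of rank $r+1$ with linearly ordered atoms, let $B_1,\dots,B_m$ be its nbc-bases in lexicographic order, and let $\Delta_1,\dots,\Delta_m$ be as defined in the context. Then for each $j\ge 2$, $\Delta_j\cap\bigcup_{k=1}^{j-1}\Delta_k=\partial\Delta_j$.
   Context: A geometric lattice is a finite graded atomic lattice whose rank function satisfies the semimodular inequality. The order complex $\Delta(L)$ has the chains of $L-\{\hat 0,\hat 1\}$ as faces; facets correspond to maximal chains. Fix a linear order on the atoms; for a cover $x\lessdot y$ let $\lambda(x,y)$ be the least atom $a$ with $x\vee a=y$, and for a facet $F$ given by $\hat 0=x_0<\dots<x_{r+1}=\hat 1$ its minimal labeling is $\lambda(F)=(\lambda(x_0,x_1),\dots,\lambda(x_r,x_{r+1}))$. A basis is a set of $r+1$ atoms with join $\hat 1$; a circuit is a minimal dependent set of atoms; a broken circuit is a circuit minus its least element; an nbc-basis is a basis containing no broken circuit. The nbc-bases, each written as an increasing sequence, are ordered lexicographically: $B_1,\dots,B_m$. For an ordering $(b_1,\dots,b_{r+1})$ of a basis $B$, the associated facet is $b_1<b_1\vee b_2<\dots<b_1\vee\dots\vee b_r$ and its basis labeling is $(b_1,\dots,b_{r+1})$. $\Sigma_j$ is the union of the facets associated to all orderings of $B_j$, and $\Delta_j$ is the pure subcomplex of $\Sigma_j$ generated by those facets of $\Sigma_j$ whose minimal labeling coincides with their basis labeling. For $j\ge2$, $\Delta_j$ is an $(r-1)$-ball and $\partial\Delta_j$ denotes its boundary subcomplex. *)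

theory Defs
  imports Main "HOL-Library.Finite_Lattice"
begin

text \<open>The lattice L is the finite lattice given by the type 'a (class
finite_lattice_complete, hence a complete lattice with bot and top).
The linear order on the atoms is given by an injective weight
w :: 'a => nat on the atoms: a precedes b iff w a < w b.\<close>

definition covers :: "'a::order \<Rightarrow> 'a \<Rightarrow> bool" where
  "covers x y \<longleftrightarrow> x < y \<and> \<not> (\<exists>z. x < z \<and> z < y)"

definition atoms :: "'a::finite_lattice_complete set" where
  "atoms = {a. covers bot a}"

definition rk :: "'a::finite_lattice_complete \<Rightarrow> nat" where
  "rk x = Max {card C | C. C \<subseteq> {y. y \<le> x} \<and> Complete_Partial_Order.chain (\<le>) C} - 1"

definition graded :: "'a::finite_lattice_complete itself \<Rightarrow> bool" where
  "graded _ \<longleftrightarrow> (\<exists>\<rho>::'a \<Rightarrow> nat. \<rho> bot = 0 \<and> (\<forall>x y. covers x y \<longrightarrow> \<rho> y = \<rho> x + 1))"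

definition atomic :: "'a::finite_lattice_complete itself \<Rightarrow> bool" where
  "atomic _ \<longleftrightarrow> (\<forall>x::'a. x = Sup {a \<in> atoms. a \<le> x})"

definition semimodular :: "'a::finite_lattice_complete itself \<Rightarrow> bool" where
  "semimodular _ \<longleftrightarrow> (\<forall>x y::'a. rk (sup x y) + rk (inf x y) \<le> rk x + rk y)"

definition geometric_lattice :: "'a::finite_lattice_complete itself \<Rightarrow> bool" where
  "geometric_lattice T \<longleftrightarrow> graded T \<and> atomic T \<and> semimodular T"

definition minlab :: "('a::finite_lattice_complete \<Rightarrow> nat) \<Rightarrow> 'a \<Rightarrow> 'a \<Rightarrow> 'a" where
  "minlab w x y = (ARG_MIN w a. a \<in> atoms \<and> sup x a = y)"

definition faces :: "'a::finite_lattice_complete set set" where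
  "faces = {F. F \<subseteq> UNIV - {bot, top} \<and> Complete_Partial_Order.chain (\<le>) F}"

definition facets :: "'a::finite_lattice_complete set set" where
  "facets = {F \<in> faces. \<forall>G \<in> faces. F \<subseteq> G \<longrightarrow> G = F}"

definition chain_elt :: "'a::finite_lattice_complete set \<Rightarrow> nat \<Rightarrow> 'a" where
  "chain_elt F i = (THE x. x \<in> F \<union> {bot, top} \<and> rk x = i)"

definition min_labeling :: "('a::finite_lattice_complete \<Rightarrow> nat) \<Rightarrow> 'a set \<Rightarrow> 'a list" where
  "min_labeling w F =
     map (\<lambda>i. minlab w (chain_elt F i) (chain_elt F (Suc i))) [0..<rk (top::'a)]"

definition indep :: "'a::finite_lattice_complete set \<Rightarrow> bool" where
  "indep S \<longleftrightarrow> S \<subseteq> atoms \<and> rk (Sup S) = card S"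

definition basis :: "'a::finite_lattice_complete set \<Rightarrow> bool" where
  "basis B \<longleftrightarrow> B \<subseteq> atoms \<and> card B = rk (top::'a) \<and> Sup B = top"

definition circuit :: "'a::finite_lattice_complete set \<Rightarrow> bool" where
  "circuit C \<longleftrightarrow> C \<subseteq> atoms \<and> \<not> indep C \<and> (\<forall>D. D \<subset> C \<longrightarrow> indep D)"

definition broken_circuit :: "('a::finite_lattice_complete \<Rightarrow> nat) \<Rightarrow> 'a set \<Rightarrow> bool" where
  "broken_circuit w S \<longleftrightarrow> (\<exists>C. circuit C \<and> S = C - {ARG_MIN w a. a \<in> C})"

definition nbc_basis :: "('a::finite_lattice_complete \<Rightarrow> nat) \<Rightarrow> 'a set \<Rightarrow> bool" where
  "nbc_basis w B \<longleftrightarrow> basis B \<and> \<not> (\<exists>S \<subseteq> B. broken_circuit w S)"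

text \<open>a basis written as increasing sequence, encoded by weights; lex order\<close>
definition basis_key :: "('a \<Rightarrow> nat) \<Rightarrow> 'a set \<Rightarrow> nat list" where
  "basis_key w B = sorted_list_of_set (w ` B)"

definition lex_less :: "nat list \<Rightarrow> nat list \<Rightarrow> bool" where
  "lex_less xs ys \<longleftrightarrow> (xs, ys) \<in> lexord {(a, b). a < b}"

definition assoc_facet :: "'a::finite_lattice_complete list \<Rightarrow> 'a set" where
  "assoc_facet bs = {Sup (set (take i bs)) | i. 1 \<le> i \<and> i < length bs}"

definition Delta_facets :: "('a::finite_lattice_complete \<Rightarrow> nat) \<Rightarrow> 'a set \<Rightarrow> 'a set set" where
  "Delta_facets w B = {assoc_facet bs | bs. distinct bs \<and> set bs = B \<and>
                          min_labeling w (assoc_facet bs) = bs}"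

definition Delta :: "('a::finite_lattice_complete \<Rightarrow> nat) \<Rightarrow> 'a set \<Rightarrow> 'a set set" where
  "Delta w B = {G. \<exists>F \<in> Delta_facets w B. G \<subseteq> F}"

text \<open>boundary of a pure simplicial complex K whose facets have d vertices:
  generated by the codimension-one faces lying in exactly one facet\<close>
definition cx_facets :: "'b set set \<Rightarrow> 'b set set" where
  "cx_facets K = {F \<in> K. \<forall>G \<in> K. F \<subseteq> G \<longrightarrow> G = F}"

definition boundary :: "nat \<Rightarrow> 'b set set \<Rightarrow> 'b set set" where
  "boundary d K = {G. \<exists>R \<in> K. G \<subseteq> R \<and> card R + 1 = d \<and>
                        card {F \<in> cx_facets K. R \<subseteq> F} = 1}"

end

theory Submission
  imports Defs
begin


lemma insort_lex:
  fixes a b :: nat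
  assumes "sorted xs" "a \<notin> set xs" "b \<notin> set xs" "a < b"
  shows "(insort a xs, insort b xs) \<in> lexord {(x, y). x < y}"
  using assms
proof (induction xs)
  case Nil then show ?case by simp
next
  case (Cons c cs)
  show ?case
  proof (cases "a < c")
    case True
    then show ?thesis using Cons by (cases "b \<le> c") auto
  next
    case False
    then have "c < a" "c < b" using Cons by auto
    then show ?thesis using Cons by auto
  qed
qed

lemma swap_lex:
  fixes a b :: nat
  assumes "finite S" "a \<notin> S" "b \<notin> S" "a < b"
  shows "lex_less (sorted_list_of_set (insert a S)) (sorted_list_of_set (insert b S))"
  using assms insort_lex[of "sorted_list_of_set S" a b]
  by (simp add: lex_less_def sorted_list_of_set_insert)

lemma lex_less_trans: "lex_less xs ys \<Longrightarrow> lex_less ys zs \<Longrightarrow> lex_less xs zs"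
  unfolding lex_less_def by (erule lexord_trans) (auto simp: trans_def)

lemma lex_less_irrefl: "\<not> lex_less xs xs"
  unfolding lex_less_def by (rule lexord_irreflexive) auto



locale GL =
  fixes w :: "'a::finite_lattice_complete \<Rightarrow> nat"
  assumes geo: "geometric_lattice TYPE('a)"
    and injw: "inj_on w atoms"
begin

definition rho :: "'a \<Rightarrow> nat" where
  "rho = (SOME \<rho>::'a \<Rightarrow> nat. \<rho> bot = 0 \<and> (\<forall>x y. covers x y \<longrightarrow> \<rho> y = \<rho> x + 1))"

lemma rho: "rho bot = 0" "covers x y \<Longrightarrow> rho y = rho x + 1"
proof -
  have "\<exists>\<rho>::'a \<Rightarrow> nat. \<rho> bot = 0 \<and> (\<forall>x y. covers x y \<longrightarrow> \<rho> y = \<rho> x + 1)"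
    using geo by (simp add: geometric_lattice_def graded_def)
  then have "rho bot = 0 \<and> (\<forall>x y. covers x y \<longrightarrow> rho y = rho x + 1)"
    unfolding rho_def by (rule someI_ex)
  then show "rho bot = 0" "covers x y \<Longrightarrow> rho y = rho x + 1" by auto
qed

lemma rho_mono_aux:
  "\<forall>x y::'a. card {z. x < z \<and> z \<le> y} = n \<longrightarrow> x < y \<longrightarrow> rho x < rho y"
proof (induction n rule: less_induct)
  case (less n)
  show ?case
  proof (intro allI impI)
    fix x y :: 'a
    assume n: "card {z. x < z \<and> z \<le> y} = n" and xy: "x < y"
    let ?A = "{z. x < z \<and> z \<le> y}"
    have "finite ?A" by simp
    moreover have "?A \<noteq> {}" using xy by auto
    ultimately obtain m where m: "m \<in> ?A" "\<forall>b\<in>?A. b \<le> m \<longrightarrow> m = b"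
      using finite_has_minimal by blast
    have cov: "covers x m" unfolding covers_def
    proof (intro conjI notI)
      show "x < m" using m(1) by simp
      assume "\<exists>z. x < z \<and> z < m"
      then obtain z where z: "x < z" "z < m" by blast
      then have "z \<in> ?A" using m(1) by auto
      then show False using m(2) z(2) by auto
    qed
    then have rm: "rho m = rho x + 1" by (rule rho)
    show "rho x < rho y"
    proof (cases "m = y")
      case True then show ?thesis using rm by simp
    next
      case False
      then have my: "m < y" using m by auto
      have sub: "{z. m < z \<and> z \<le> y} \<subset> ?A" using m by auto
      then have "card {z. m < z \<and> z \<le> y} < n" using n psubset_card_mono[OF _ sub] by simp
      then have "rho m < rho y" using less my by blast
      then show ?thesis using rm by simp
    qed
  qed
qed

lemma rho_mono: "x < y \<Longrightarrow> rho x < rho y"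
  using rho_mono_aux by blast

lemma rho_le: "x \<le> y \<Longrightarrow> rho x \<le> rho y"
  using rho_mono by (metis le_less less_imp_le_nat)

lemma chain_card_le:
  assumes "C \<subseteq> {y. y \<le> x}" "Complete_Partial_Order.chain (\<le>) C"
  shows "card C \<le> rho x + 1"
proof -
  have "inj_on rho C"
    using assms(2) unfolding inj_on_def Complete_Partial_Order.chain_def
    by (metis less_le nat_less_le rho_mono)
  moreover have "rho ` C \<subseteq> {..rho x}" using assms(1) rho_le by auto
  ultimately have "card C \<le> card {..rho x}"
    by (metis card_image card_mono finite_atMost)
  then show ?thesis by simp
qed

lemma chain_exists:
  "\<exists>C. C \<subseteq> {y. y \<le> x} \<and> Complete_Partial_Order.chain (\<le>) C \<and> card C = rho x + 1"
proof (induction "rho x" arbitrary: x)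
  case 0
  have "x = bot"
  proof (rule ccontr)
    assume "x \<noteq> bot"
    then have "bot < x" by (simp add: bot.not_eq_extremum)
    then show False using rho_mono[of bot x] rho(1) 0 by simp
  qed
  then show ?case using 0
    by (intro exI[of _ "{bot}"]) (auto simp: Complete_Partial_Order.chain_def)
next
  case (Suc n)
  have "x \<noteq> bot" using Suc rho(1) by auto
  then have "bot < x" by (simp add: bot.not_eq_extremum)
  let ?A = "{z. z < x}"
  have "finite ?A" "?A \<noteq> {}" using \<open>bot < x\<close> by auto
  then obtain m where m: "m \<in> ?A" "\<forall>b\<in>?A. m \<le> b \<longrightarrow> m = b"
    using finite_has_maximal by blast
  have "covers m x" unfolding covers_def using m
    using m(1) m(2)[rule_format] by (metis (mono_tags, lifting) less_le_not_le mem_Collect_eq order.strict_trans2)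
  then have "rho x = rho m + 1" by (rule rho)
  then have "n = rho m" using Suc by simp
  then obtain C where C: "C \<subseteq> {y. y \<le> m}" "Complete_Partial_Order.chain (\<le>) C" "card C = rho m + 1"
    using Suc by blast
  have "x \<notin> C" using C(1) m(1) by auto
  moreover have "finite C" by simp
  ultimately have "card (insert x C) = rho x + 1" using C \<open>rho x = rho m + 1\<close> by simp
  moreover have "insert x C \<subseteq> {y. y \<le> x}" using C(1) m(1) by auto
  moreover have "Complete_Partial_Order.chain (\<le>) (insert x C)"
    using C(1,2) m(1) unfolding Complete_Partial_Order.chain_def by auto
  ultimately show ?case by blast
qed

lemma rk_rho: "rk x = rho x"
proof -
  let ?S = "{card C | C. C \<subseteq> {y. y \<le> x} \<and> Complete_Partial_Order.chain (\<le>) C}"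
  have "?S \<subseteq> card ` (UNIV :: 'a set set)" by auto
  then have "finite ?S" by (meson finite finite_surj)
  moreover have "rho x + 1 \<in> ?S" using chain_exists[of x] by (metis (mono_tags, lifting) mem_Collect_eq)
  moreover have "\<forall>s\<in>?S. s \<le> rho x + 1" using chain_card_le by auto
  ultimately have "Max ?S = rho x + 1" by (intro Max_eqI) auto
  then show ?thesis unfolding rk_def by simp
qed

lemma rk_bot: "rk (bot::'a) = 0" using rho rk_rho by simp
lemma rk_cov: fixes x y :: 'a shows "covers x y \<Longrightarrow> rk y = rk x + 1" using rho rk_rho by simp
lemma rk_mono: fixes x y :: 'a shows "x < y \<Longrightarrow> rk x < rk y" using rho_mono rk_rho by simp
lemma rk_le: fixes x y :: 'a shows "x \<le> y \<Longrightarrow> rk x \<le> rk y" using rho_le rk_rho by simp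
lemma rk_eq: fixes x y :: 'a shows "x \<le> y \<Longrightarrow> rk x = rk y \<Longrightarrow> x = y"
  using rk_mono[of x y] le_less[of x y] by auto
lemma rk_covI: fixes x y :: 'a shows "x < y \<Longrightarrow> rk y = rk x + 1 \<Longrightarrow> covers x y"
  unfolding covers_def proof (intro conjI notI)
  assume "x < y" "rk y = rk x + 1" "\<exists>z. x < z \<and> z < y"
  then obtain z where "x < z" "z < y" by blast
  then have "rk x < rk z" "rk z < rk y" using rk_mono by auto
  then show False using \<open>rk y = rk x + 1\<close> by simp
qed

end


context GL begin

lemma atom_cov: "(a::'a) \<in> atoms \<Longrightarrow> covers bot a" by (simp add: atoms_def)

lemma atom_not_bot: "(a::'a) \<in> atoms \<Longrightarrow> \<not> a \<le> bot"
proof -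
  assume "a \<in> atoms"
  then have "bot < a" using atom_cov unfolding covers_def by simp
  then show ?thesis by (metis le_bot less_irrefl)
qed

lemma atom_join:
  fixes x a :: 'a
  assumes a: "a \<in> atoms" and na: "\<not> a \<le> x"
  shows "covers x (sup x a)" "rk (sup x a) = rk x + 1"
proof -
  have "inf x a \<noteq> a" using na by (metis inf.absorb_iff2 inf_commute)
  then have "inf x a < a" by (meson inf_le2 order.not_eq_order_implies_strict)
  then have i: "inf x a = bot" using atom_cov[OF a] unfolding covers_def
    by (metis bot.not_eq_extremum)
  have "rk (sup x a) + rk (inf x a) \<le> rk x + rk a"
    using geo by (simp add: geometric_lattice_def semimodular_def)
  moreover have "rk a = 1" using rk_cov[OF atom_cov[OF a]] rk_bot by simp
  ultimately have le: "rk (sup x a) \<le> rk x + 1" using i rk_bot by simp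
  have lt: "x < sup x a" using na by (metis sup.cobounded1 sup.cobounded2 le_less)
  then have "rk x < rk (sup x a)" by (rule rk_mono)
  then show "rk (sup x a) = rk x + 1" using le by simp
  then show "covers x (sup x a)" using lt by (intro rk_covI) auto
qed

lemma atomic_ex:
  fixes x y :: 'a
  assumes "x < y"
  shows "\<exists>a\<in>atoms. a \<le> y \<and> \<not> a \<le> x"
proof (rule ccontr)
  assume "\<not> ?thesis"
  then have "Sup {a \<in> atoms. a \<le> y} \<le> x" by (auto intro: Sup_least)
  moreover have "y = Sup {a \<in> atoms. a \<le> y}"
    using geo by (simp add: geometric_lattice_def atomic_def)
  ultimately show False using assms by simp
qed

lemma cov_atom_iff:
  fixes x y a :: 'a
  assumes c: "covers x y" and a: "a \<in> atoms"
  shows "sup x a = y \<longleftrightarrow> a \<le> y \<and> \<not> a \<le> x"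
proof
  assume s: "sup x a = y"
  then have "a \<le> y" by auto
  moreover have "\<not> a \<le> x" using s c unfolding covers_def by (metis sup.absorb1 order.irrefl)
  ultimately show "a \<le> y \<and> \<not> a \<le> x" by simp
next
  assume h: "a \<le> y \<and> \<not> a \<le> x"
  then have "x < sup x a" by (metis sup.cobounded1 sup.cobounded2 le_less)
  moreover have "sup x a \<le> y" using h c unfolding covers_def by auto
  ultimately show "sup x a = y" using c unfolding covers_def by (auto simp: le_less)
qed

definition mm :: "'a \<Rightarrow> 'a \<Rightarrow> 'a" where
  "mm u v = (ARG_MIN w a. a \<in> atoms \<and> a \<le> v \<and> \<not> a \<le> u)"

lemma mm_props:
  fixes u v :: 'a
  assumes "u < v"
  shows "mm u v \<in> atoms" "mm u v \<le> v" "\<not> mm u v \<le> u"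
    "\<And>b. b \<in> atoms \<Longrightarrow> b \<le> v \<Longrightarrow> \<not> b \<le> u \<Longrightarrow> w (mm u v) \<le> w b"
proof -
  obtain a where "a \<in> atoms \<and> a \<le> v \<and> \<not> a \<le> u" using atomic_ex[OF assms] by blast
  note L = arg_min_nat_lemma[of "\<lambda>a. a \<in> atoms \<and> a \<le> v \<and> \<not> a \<le> u", OF this, of w]
  show "mm u v \<in> atoms" "mm u v \<le> v" "\<not> mm u v \<le> u"
    "\<And>b. b \<in> atoms \<Longrightarrow> b \<le> v \<Longrightarrow> \<not> b \<le> u \<Longrightarrow> w (mm u v) \<le> w b"
    using L unfolding mm_def by auto
qed

lemma inj_atoms: "(a::'a) \<in> atoms \<Longrightarrow> b \<in> atoms \<Longrightarrow> w a = w b \<Longrightarrow> a = b"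
  using injw by (meson inj_onD)

lemma mm_eqI:
  fixes u v c :: 'a
  assumes "u < v" "c \<in> atoms" "c \<le> v" "\<not> c \<le> u"
    "\<And>b. b \<in> atoms \<Longrightarrow> b \<le> v \<Longrightarrow> \<not> b \<le> u \<Longrightarrow> w c \<le> w b"
  shows "mm u v = c"
proof -
  have "w (mm u v) \<le> w c" using mm_props(4)[OF assms(1) assms(2-4)] .
  moreover have "w c \<le> w (mm u v)" using assms(5) mm_props(1-3)[OF assms(1)] by blast
  ultimately show ?thesis using inj_atoms mm_props(1)[OF assms(1)] assms(2) by simp
qed

lemma minlab_mm:
  fixes x y :: 'a
  assumes "covers x y"
  shows "minlab w x y = mm x y"
proof -
  have "(\<lambda>a. a \<in> atoms \<and> sup x a = y) = (\<lambda>a. a \<in> atoms \<and> a \<le> y \<and> \<not> a \<le> x)"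
    using cov_atom_iff[OF assms] by auto
  then show ?thesis unfolding minlab_def mm_def by simp
qed

end


context GL begin

definition RR :: nat where "RR = rk (top::'a)"

definition mchain :: "(nat \<Rightarrow> 'a) \<Rightarrow> bool" where
  "mchain z \<longleftrightarrow> z 0 = bot \<and> (\<forall>k<RR. covers (z k) (z (Suc k))) \<and> (\<forall>k\<ge>RR. z k = top)"

definition lab :: "(nat \<Rightarrow> 'a) \<Rightarrow> nat \<Rightarrow> 'a" where
  "lab z k = minlab w (z k) (z (Suc k))"

definition labs :: "(nat \<Rightarrow> 'a) \<Rightarrow> 'a list" where
  "labs z = map (lab z) [0..<RR]"

definition fac :: "(nat \<Rightarrow> 'a) \<Rightarrow> 'a set" where
  "fac z = z ` {1..<RR}"

definition lset :: "(nat \<Rightarrow> 'a) \<Rightarrow> 'a set" where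
  "lset z = lab z ` {..<RR}"

lemma lset_labs: "set (labs z) = lset z"
  unfolding labs_def lset_def by auto

lemma mc_rk: "mchain z \<Longrightarrow> k \<le> RR \<Longrightarrow> rk (z k) = k"
proof (induction k)
  case 0 then show ?case by (simp add: mchain_def rk_bot)
next
  case (Suc k)
  then have "covers (z k) (z (Suc k))" by (simp add: mchain_def)
  then show ?case using Suc rk_cov by simp
qed

lemma mc_top: "mchain z \<Longrightarrow> z RR = top" by (simp add: mchain_def)

lemma mc_step: "mchain z \<Longrightarrow> z k \<le> z (Suc k)"
  unfolding mchain_def covers_def by (cases "k < RR") auto

lemma mc_le: "mchain z \<Longrightarrow> j \<le> k \<Longrightarrow> z j \<le> z k"
  using mc_step lift_Suc_mono_le[of z] by blast

lemma mc_inj: "mchain z \<Longrightarrow> j \<le> RR \<Longrightarrow> k \<le> RR \<Longrightarrow> z j = z k \<Longrightarrow> j = k"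
  using mc_rk by metis

lemma mc_lt: "mchain z \<Longrightarrow> j < k \<Longrightarrow> k \<le> RR \<Longrightarrow> z j < z k"
  using mc_le mc_inj by (metis less_imp_le_nat order_le_less order.strict_trans2 less_irrefl)

lemma mc_cov: "mchain z \<Longrightarrow> k < RR \<Longrightarrow> covers (z k) (z (Suc k))"
  by (simp add: mchain_def)

lemma lab_mm: "mchain z \<Longrightarrow> k < RR \<Longrightarrow> lab z k = mm (z k) (z (Suc k))"
  unfolding lab_def using mc_cov minlab_mm by blast

lemma mc_lab:
  assumes "mchain z" "k < RR"
  shows "lab z k \<in> atoms" "lab z k \<le> z (Suc k)" "\<not> lab z k \<le> z k"
    "\<And>b. b \<in> atoms \<Longrightarrow> b \<le> z (Suc k) \<Longrightarrow> \<not> b \<le> z k \<Longrightarrow> w (lab z k) \<le> w b"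
    "sup (z k) (lab z k) = z (Suc k)"
proof -
  have lt: "z k < z (Suc k)" using mc_cov[OF assms] by (simp add: covers_def)
  show "lab z k \<in> atoms" "lab z k \<le> z (Suc k)" "\<not> lab z k \<le> z k"
    "\<And>b. b \<in> atoms \<Longrightarrow> b \<le> z (Suc k) \<Longrightarrow> \<not> b \<le> z k \<Longrightarrow> w (lab z k) \<le> w b"
    using mm_props[OF lt] lab_mm[OF assms] by auto
  then show "sup (z k) (lab z k) = z (Suc k)"
    using cov_atom_iff[OF mc_cov[OF assms]] by simp
qed

lemma mc_Sup: "mchain z \<Longrightarrow> k \<le> RR \<Longrightarrow> z k = Sup (lab z ` {..<k})"
proof (induction k)
  case 0 then show ?case by (simp add: mchain_def)
next
  case (Suc k)
  have "lab z ` {..<Suc k} = insert (lab z k) (lab z ` {..<k})" by (simp add: lessThan_Suc)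
  then have "Sup (lab z ` {..<Suc k}) = sup (lab z k) (z k)" using Suc by simp
  also have "\<dots> = z (Suc k)" using mc_lab(5)[OF Suc.prems(1)] Suc.prems(2) by (simp add: sup_commute)
  finally show ?case by simp
qed

lemma lab_below: "mchain z \<Longrightarrow> j < k \<Longrightarrow> k \<le> RR \<Longrightarrow> lab z j \<le> z k"
  using mc_lab(2) mc_le by (meson Suc_leI less_le_trans order_trans)

lemma lab_inj: "mchain z \<Longrightarrow> inj_on (lab z) {..<RR}"
proof (rule inj_onI)
  fix j k assume z: "mchain z" and j: "j \<in> {..<RR}" and k: "k \<in> {..<RR}" and e: "lab z j = lab z k"
  show "j = k"
  proof (rule ccontr)
    assume "j \<noteq> k"
    then consider "j < k" | "k < j" by linarith
    then show False
    proof cases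
      case 1 then show False using lab_below[OF z 1] mc_lab(3)[OF z, of k] k e by auto
    next
      case 2 then show False using lab_below[OF z 2] mc_lab(3)[OF z, of j] j e by auto
    qed
  qed
qed

lemma labs_distinct: "mchain z \<Longrightarrow> distinct (labs z)"
  unfolding labs_def using lab_inj by (simp add: distinct_map lessThan_atLeast0)

lemma lset_card: "mchain z \<Longrightarrow> card (lset z) = RR"
  unfolding lset_def using lab_inj card_image by fastforce

lemma lset_atoms: "mchain z \<Longrightarrow> lset z \<subseteq> atoms"
  unfolding lset_def using mc_lab(1) by auto

lemma lset_Sup: "mchain z \<Longrightarrow> Sup (lset z) = top"
  unfolding lset_def using mc_Sup[of z RR] mc_top[of z] by simp

lemma lset_basis: "mchain z \<Longrightarrow> basis (lset z)"
  unfolding basis_def using lset_card lset_atoms lset_Sup RR_def by simp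

end


context GL begin

lemma indep_empty: "indep ({}::'a set)"
  unfolding indep_def using rk_bot by simp

lemma circuit_elem:
  fixes C :: "'a set"
  assumes c: "circuit C" and e: "e \<in> C"
  shows "e \<le> Sup (C - {e})"
proof (rule ccontr)
  assume n: "\<not> e \<le> Sup (C - {e})"
  have "indep (C - {e})" using c e unfolding circuit_def by blast
  then have r: "rk (Sup (C - {e})) = card (C - {e})" by (simp add: indep_def)
  have ea: "e \<in> atoms" using c e by (auto simp: circuit_def)
  have "rk (sup (Sup (C - {e})) e) = card (C - {e}) + 1" using atom_join(2)[OF ea n] r by simp
  moreover have "sup (Sup (C - {e})) e = Sup C"
    using e by (metis Sup_insert insert_Diff sup_commute)
  moreover have "card (C - {e}) + 1 = card C" using e by (metis Suc_eq_plus1 card_Suc_Diff1 finite)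
  ultimately have "indep C" using c unfolding indep_def circuit_def by simp
  then show False using c by (simp add: circuit_def)
qed

lemma lset_nbc: "mchain z \<Longrightarrow> nbc_basis w (lset z)"
proof -
  assume z: "mchain z"
  have "\<not> broken_circuit w S" if S: "S \<subseteq> lset z" for S
  proof
    assume "broken_circuit w S"
    then obtain C where c: "circuit C" and SC: "S = C - {ARG_MIN w a. a \<in> C}"
      unfolding broken_circuit_def by blast
    define c0 where "c0 = (ARG_MIN w a. a \<in> C)"
    have "C \<noteq> {}" using c indep_empty by (auto simp: circuit_def)
    then obtain e where "e \<in> C" by blast
    then have c0C: "c0 \<in> C" and c0min: "\<And>b. b \<in> C \<Longrightarrow> w c0 \<le> w b"
      using arg_min_nat_lemma[of "\<lambda>a. a \<in> C" e w] unfolding c0_def by auto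
    have Catoms: "C \<subseteq> atoms" using c by (simp add: circuit_def)
    have "S \<noteq> {}"
    proof
      assume "S = {}"
      then have "C = {c0}" using SC c0C unfolding c0_def by auto
      moreover have "indep {c0}" using c0C Catoms rk_cov[OF atom_cov, of c0] rk_bot
        by (auto simp: indep_def)
      ultimately show False using c by (simp add: circuit_def)
    qed
    define K where "K = {k. k < RR \<and> lab z k \<in> S}"
    have "K \<noteq> {}" using \<open>S \<noteq> {}\<close> S unfolding K_def lset_def by auto
    moreover have "finite K" unfolding K_def by simp
    ultimately have kK: "Max K \<in> K" and kmax: "\<And>j. j \<in> K \<Longrightarrow> j \<le> Max K" by auto
    define k where "k = Max K"
    define b where "b = lab z k"
    have kR: "k < RR" and bS: "b \<in> S" using kK unfolding K_def k_def b_def by auto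
    have below: "s \<le> z k" if sS: "s \<in> S" and sb: "s \<noteq> b" for s
    proof -
      obtain j where j: "j < RR" "s = lab z j" using S sS unfolding lset_def by auto
      then have "j \<in> K" using sS unfolding K_def by auto
      then have "j \<le> k" using kmax k_def by auto
      moreover have "j \<noteq> k" using j sb b_def by auto
      ultimately show ?thesis using lab_below[OF z, of j k] j kR by simp
    qed
    have bk1: "b \<le> z (Suc k)" using mc_lab(2)[OF z kR] b_def by simp
    have zle: "z k \<le> z (Suc k)" using mc_step[OF z] .
    have "Sup S \<le> z (Suc k)"
    proof (rule Sup_least)
      fix s assume "s \<in> S"
      then show "s \<le> z (Suc k)" using below bk1 zle by (cases "s = b") (auto intro: order_trans)
    qed
    moreover have "c0 \<le> Sup S" using circuit_elem[OF c c0C] SC c0_def by simp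
    ultimately have c0k1: "c0 \<le> z (Suc k)" by simp
    show False
    proof (cases "c0 \<le> z k")
      case True
      have "C - {b} \<subseteq> insert c0 (S - {b})" using SC c0_def by auto
      have "Sup (C - {b}) \<le> z k"
      proof (rule Sup_least)
        fix s assume "s \<in> C - {b}"
        then have "s = c0 \<or> (s \<in> S \<and> s \<noteq> b)" using \<open>C - {b} \<subseteq> insert c0 (S - {b})\<close> by blast
        then show "s \<le> z k" using below True by blast
      qed
      moreover have "b \<in> C" using bS SC by auto
      ultimately have "b \<le> z k" using circuit_elem[OF c] order_trans by blast
      then show False using mc_lab(3)[OF z kR] b_def by simp
    next
      case False
      have "c0 \<in> atoms" using c0C Catoms by auto
      then have "w b \<le> w c0" using mc_lab(4)[OF z kR] c0k1 False b_def by simp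
      moreover have "w c0 \<le> w b" using c0min bS SC by auto
      ultimately have "b = c0" using inj_atoms \<open>c0 \<in> atoms\<close> mc_lab(1)[OF z kR] b_def by simp
      then show False using bS SC c0_def by auto
    qed
  qed
  then show ?thesis unfolding nbc_basis_def using lset_basis[OF z] by blast
qed

lemma chain_elt_fac:
  assumes z: "mchain z" and i: "i \<le> RR"
  shows "chain_elt (fac z) i = z i"
  unfolding chain_elt_def
proof (rule the_equality)
  have "z i \<in> fac z \<union> {bot, top}"
  proof (cases "i = 0 \<or> i = RR")
    case True then show ?thesis using z mc_top by (auto simp: mchain_def)
  next
    case False then show ?thesis using i unfolding fac_def by auto
  qed
  then show "z i \<in> fac z \<union> {bot, top} \<and> rk (z i) = i" using mc_rk[OF z i] by simp
next
  fix y assume y: "y \<in> fac z \<union> {bot, top} \<and> rk y = i"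
  have "y \<in> z ` {..RR}"
  proof -
    from y consider "y \<in> fac z" | "y = bot" | "y = top" by auto
    then show ?thesis
    proof cases
      case 1 then show ?thesis unfolding fac_def by auto
    next
      case 2 then show ?thesis using z unfolding mchain_def by (metis atMost_iff image_eqI le0)
    next
      case 3 then show ?thesis using mc_top[OF z] by (metis atMost_iff image_eqI order_refl)
    qed
  qed
  then obtain j where j: "j \<le> RR" "y = z j" by auto
  then have "rk y = j" using mc_rk[OF z] by simp
  then show "y = z i" using y j by simp
qed

lemma minlab_fac: "mchain z \<Longrightarrow> min_labeling w (fac z) = labs z"
  unfolding min_labeling_def labs_def RR_def[symmetric]
  using chain_elt_fac by (auto simp: lab_def)

lemma take_labs: "i \<le> RR \<Longrightarrow> set (take i (labs z)) = lab z ` {..<i}"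
  unfolding labs_def by (auto simp: take_map take_upt lessThan_atLeast0)

lemma assoc_labs: "mchain z \<Longrightarrow> assoc_facet (labs z) = fac z"
proof -
  assume z: "mchain z"
  have e: "\<And>i. i < RR \<Longrightarrow> Sup (set (take i (labs z))) = z i"
    using take_labs mc_Sup[OF z] by simp
  have "assoc_facet (labs z) = (\<lambda>i. Sup (set (take i (labs z)))) ` {1..<RR}"
    unfolding assoc_facet_def image_def by (simp add: labs_def Bex_def) blast
  also have "\<dots> = z ` {1..<RR}" using e by (intro image_cong) auto
  finally show ?thesis by (simp add: fac_def)
qed

lemma fac_card: "mchain z \<Longrightarrow> card (fac z) = RR - 1"
proof -
  assume z: "mchain z"
  have "inj_on z {1..<RR}" using mc_inj[OF z] by (auto simp: inj_on_def)
  then show ?thesis unfolding fac_def by (simp add: card_image)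
qed

lemma DF_char:
  assumes B: "basis B"
  shows "F \<in> Delta_facets w B \<longleftrightarrow> (\<exists>z. mchain z \<and> lset z = B \<and> F = fac z)"
proof
  assume "\<exists>z. mchain z \<and> lset z = B \<and> F = fac z"
  then obtain z where z: "mchain z" "lset z = B" "F = fac z" by blast
  show "F \<in> Delta_facets w B" unfolding Delta_facets_def
    using z labs_distinct[OF z(1)] lset_labs minlab_fac[OF z(1)] assoc_labs[OF z(1)]
    by (intro CollectI exI[of _ "labs z"]) auto
next
  assume "F \<in> Delta_facets w B"
  then obtain bs where bs: "F = assoc_facet bs" "distinct bs" "set bs = B"
    "min_labeling w (assoc_facet bs) = bs" unfolding Delta_facets_def by blast
  have len: "length bs = RR" using bs B distinct_card[OF bs(2)] by (simp add: basis_def RR_def)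
  have batoms: "set bs \<subseteq> atoms" using bs B by (simp add: basis_def)
  define z where "z k = Sup (set (take k bs))" for k
  have z0: "z 0 = bot" unfolding z_def by simp
  have zbig: "z k = top" if "k \<ge> RR" for k
    using that len bs B unfolding z_def basis_def by simp
  have zstep: "z (Suc k) = sup (z k) (bs ! k)" if "k < RR" for k
    using that len unfolding z_def by (simp add: take_Suc_conv_app_nth sup_commute)
  have rstep: "rk (z (Suc k)) \<le> rk (z k) + 1" if "k < RR" for k
  proof (cases "bs ! k \<le> z k")
    case True then show ?thesis using zstep[OF that] by (simp add: sup.absorb1)
  next
    case False
    have "bs ! k \<in> atoms" using batoms that len by auto
    then show ?thesis using zstep[OF that] atom_join(2)[OF _ False] by simp
  qed
  have rup: "rk (z k) \<le> k" if "k \<le> RR" for k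
    using that
  proof (induction k)
    case 0 then show ?case using z0 rk_bot by simp
  next
    case (Suc k) then show ?case using rstep[of k] by simp
  qed
  have rdown: "rk (z (k + d)) \<le> rk (z k) + d" if "k + d \<le> RR" for k d
    using that
  proof (induction d)
    case 0 then show ?case by simp
  next
    case (Suc d) then show ?case using rstep[of "k + d"] by simp
  qed
  have rtop: "rk (z RR) = RR" using zbig[of RR] RR_def by simp
  have rz: "rk (z k) = k" if "k \<le> RR" for k
    using rup[OF that] rdown[of k "RR - k"] that rtop by simp
  have mc: "mchain z" unfolding mchain_def
  proof (intro conjI allI impI)
    show "z 0 = bot" by (rule z0)
    show "z k = top" if "RR \<le> k" for k using zbig that by simp
    fix k assume k: "k < RR"
    have "z k \<le> z (Suc k)" using zstep[OF k] by simp
    moreover have "rk (z (Suc k)) = rk (z k) + 1" using rz k by simp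
    ultimately show "covers (z k) (z (Suc k))"
      by (intro rk_covI) (auto simp: le_less)
  qed
  have fz: "fac z = assoc_facet bs"
    unfolding assoc_facet_def fac_def z_def len image_def by (simp add: Bex_def) blast
  have "labs z = bs" using minlab_fac[OF mc] fz bs(4) by simp
  then have "lset z = B" using lset_labs bs(3) by metis
  then show "\<exists>z. mchain z \<and> lset z = B \<and> F = fac z" using mc fz bs(1) by blast
qed

end


context GL begin

definition mid :: "'a \<Rightarrow> 'a \<Rightarrow> 'a \<Rightarrow> bool" where
  "mid u v y \<longleftrightarrow> covers u y \<and> covers y v"

lemma meet_mid:
  fixes u y y' a :: 'a
  assumes "covers u y" "covers u y'" "y \<noteq> y'" "a \<le> y" "a \<le> y'"
  shows "a \<le> u"
proof -
  have uy: "u < y" "u < y'" using assms by (auto simp: covers_def)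
  have "u \<le> inf y y'" using uy by (simp add: less_imp_le)
  moreover have "inf y y' \<noteq> y"
  proof
    assume "inf y y' = y"
    then have "y \<le> y'" by (metis inf.absorb_iff1)
    then have "y = y'" using assms(2) uy(1) unfolding covers_def by (auto simp: le_less)
    then show False using assms(3) by simp
  qed
  then have "inf y y' < y" by (meson inf_le1 order.not_eq_order_implies_strict)
  ultimately have "inf y y' = u" using assms(1) unfolding covers_def by (auto simp: le_less)
  then show ?thesis using assms(4,5) by (metis le_inf_iff)
qed

context
  fixes u v :: 'a
  assumes uv: "u < v" and ruv: "rk v = rk u + 2"
begin

lemma mid_rk: "mid u v y \<Longrightarrow> rk y = rk u + 1"
  unfolding mid_def using rk_cov by auto

lemma mid_lt: "mid u v y \<Longrightarrow> u < y \<and> y < v"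
  unfolding mid_def covers_def by auto

lemma atom_mid:
  assumes a: "a \<in> atoms" "a \<le> v" "\<not> a \<le> u"
  shows "mid u v (sup u a)"
proof -
  have c: "covers u (sup u a)" and r: "rk (sup u a) = rk u + 1" using atom_join[OF a(1,3)] by auto
  have "sup u a \<le> v" using a uv by simp
  moreover have "sup u a \<noteq> v" using r ruv by auto
  ultimately have "sup u a < v" by (simp add: le_less)
  then have "covers (sup u a) v" using r ruv by (intro rk_covI) auto
  then show ?thesis using c by (simp add: mid_def)
qed

abbreviation "m0 \<equiv> mm u v"
abbreviation "y0 \<equiv> sup u (mm u v)"
abbreviation "m2 \<equiv> mm (sup u (mm u v)) v"

lemma m0: "m0 \<in> atoms" "m0 \<le> v" "\<not> m0 \<le> u"
    "\<And>b. b \<in> atoms \<Longrightarrow> b \<le> v \<Longrightarrow> \<not> b \<le> u \<Longrightarrow> w m0 \<le> w b"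
  using mm_props[OF uv] by auto

lemma K1: "mid u v y0" "mm u y0 = m0"
proof -
  show my: "mid u v y0" using atom_mid m0 by simp
  have "u < y0" using mid_lt[OF my] by simp
  then show "mm u y0 = m0"
    using m0 mid_lt[OF my] by (intro mm_eqI) auto
qed

lemma mm_mid:
  assumes "mid u v y"
  shows "mm u y \<in> atoms" "mm u y \<le> y" "\<not> mm u y \<le> u" "mm u y \<le> v"
    "mm y v \<in> atoms" "mm y v \<le> v" "\<not> mm y v \<le> y" "\<not> mm y v \<le> u"
    "\<And>b. b \<in> atoms \<Longrightarrow> b \<le> y \<Longrightarrow> \<not> b \<le> u \<Longrightarrow> w (mm u y) \<le> w b"
    "\<And>b. b \<in> atoms \<Longrightarrow> b \<le> v \<Longrightarrow> \<not> b \<le> y \<Longrightarrow> w (mm y v) \<le> w b"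
proof -
  have l: "u < y" "y < v" using mid_lt[OF assms] by auto
  show "mm u y \<in> atoms" "mm u y \<le> y" "\<not> mm u y \<le> u"
    "\<And>b. b \<in> atoms \<Longrightarrow> b \<le> y \<Longrightarrow> \<not> b \<le> u \<Longrightarrow> w (mm u y) \<le> w b"
    using mm_props[OF l(1)] by auto
  show "mm u y \<le> v" using mm_props(2)[OF l(1)] l(2) by simp
  show "mm y v \<in> atoms" "mm y v \<le> v" "\<not> mm y v \<le> y"
    "\<And>b. b \<in> atoms \<Longrightarrow> b \<le> v \<Longrightarrow> \<not> b \<le> y \<Longrightarrow> w (mm y v) \<le> w b"
    using mm_props[OF l(2)] by auto
  show "\<not> mm y v \<le> u" using mm_props(3)[OF l(2)] l(1) by (meson less_imp_le order_trans)
qed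

lemma m0_not_le:
  assumes "mid u v y" "y \<noteq> y0"
  shows "\<not> m0 \<le> y"
proof
  assume "m0 \<le> y"
  then have "y0 \<le> y" using mid_lt[OF assms(1)] by (simp add: less_imp_le)
  moreover have "rk y0 = rk y" using mid_rk[OF assms(1)] mid_rk[OF K1(1)] by simp
  ultimately show False using rk_eq assms(2) by blast
qed

lemma K2:
  assumes "mid u v y" "y \<noteq> y0"
  shows "mm y v = m0" "mm u y \<noteq> m0" "w m0 < w (mm u y)"
proof -
  have l: "u < y" "y < v" using mid_lt[OF assms(1)] by auto
  have n: "\<not> m0 \<le> y" by (rule m0_not_le[OF assms])
  show "mm y v = m0"
  proof (rule mm_eqI)
    show "y < v" "m0 \<in> atoms" "m0 \<le> v" "\<not> m0 \<le> y" using l m0 n by auto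
    fix b assume "b \<in> atoms" "b \<le> v" "\<not> b \<le> y"
    moreover then have "\<not> b \<le> u" using l by (meson less_imp_le order_trans)
    ultimately show "w m0 \<le> w b" using m0(4) by simp
  qed
  show ne: "mm u y \<noteq> m0" using mm_mid(2)[OF assms(1)] n by auto
  have "w m0 \<le> w (mm u y)" using m0(4) mm_mid[OF assms(1)] by simp
  then show "w m0 < w (mm u y)" using ne inj_atoms m0(1) mm_mid(1)[OF assms(1)] by force
qed

lemma K3: "m2 \<noteq> m0" "w m0 < w m2"
proof -
  show ne: "m2 \<noteq> m0" using mm_mid(7)[OF K1(1)] by auto
  have "w m0 \<le> w m2" using m0(4) mm_mid[OF K1(1)] by simp
  then show "w m0 < w m2" using ne inj_atoms m0(1) mm_mid(5)[OF K1(1)] by force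
qed

lemma K4:
  assumes "mid u v y" "y \<noteq> y0"
  shows "w m2 \<le> w (mm u y)"
proof -
  have "\<not> mm u y \<le> y0"
    using meet_mid[of u y y0 "mm u y"] assms K1(1) mm_mid[OF assms(1)] unfolding mid_def by auto
  then show ?thesis using mm_mid(10)[OF K1(1)] mm_mid[OF assms(1)] by simp
qed

lemma K5:
  shows "mid u v (sup u m2)" "sup u m2 \<noteq> y0" "mm u (sup u m2) = m2"
proof -
  note M = mm_mid[OF K1(1)]
  show my: "mid u v (sup u m2)" using atom_mid M by simp
  show "sup u m2 \<noteq> y0" using M(7) by (metis sup.cobounded2)
  then have ne: "sup u m2 \<noteq> y0" .
  have "u < sup u m2" using mid_lt[OF my] by simp
  then show "mm u (sup u m2) = m2"
  proof (rule mm_eqI)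
    show "m2 \<in> atoms" "m2 \<le> sup u m2" "\<not> m2 \<le> u" using M by auto
    fix b assume b: "b \<in> atoms" "b \<le> sup u m2" "\<not> b \<le> u"
    have "\<not> b \<le> y0" using meet_mid[of u "sup u m2" y0 b] my K1(1) b ne unfolding mid_def by auto
    moreover have "b \<le> v" using b(2) mid_lt[OF my] by (meson less_imp_le order_trans)
    ultimately show "w m2 \<le> w b" using M(10) b(1) by simp
  qed
qed

lemma K6:
  assumes "mid u v y" "mid u v y'" "y \<noteq> y'"
  shows "mm u y \<noteq> mm u y'"
proof
  assume e: "mm u y = mm u y'"
  have "mm u y \<le> u" using meet_mid[of u y y' "mm u y"] assms e mm_mid(2)[OF assms(1)] mm_mid(2)[OF assms(2)]
    unfolding mid_def by auto
  then show False using mm_mid(3)[OF assms(1)] by simp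
qed

end

end


context GL begin

definition Xs :: "(nat \<Rightarrow> 'a) \<Rightarrow> nat \<Rightarrow> 'a set" where
  "Xs z i = lab z ` ({..<RR} - {i - 1, i})"

definition word :: "(nat \<Rightarrow> 'a) \<Rightarrow> nat list" where
  "word z = map (\<lambda>k. w (lab z k)) [0..<RR]"

lemma uv_props:
  assumes z: "mchain z" and i: "0 < i" "i < RR"
  shows "z (i - 1) < z (Suc i)" "rk (z (Suc i)) = rk (z (i - 1)) + 2"
    "mid (z (i - 1)) (z (Suc i)) (z i)"
proof -
  show "z (i - 1) < z (Suc i)" using mc_lt[OF z, of "i - 1" "Suc i"] i by simp
  show "rk (z (Suc i)) = rk (z (i - 1)) + 2" using mc_rk[OF z, of "i - 1"] mc_rk[OF z, of "Suc i"] i by simp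
  have "covers (z (i - 1)) (z i)" using mc_cov[OF z, of "i - 1"] i by simp
  moreover have "covers (z i) (z (Suc i))" using mc_cov[OF z, of i] i by simp
  ultimately show "mid (z (i - 1)) (z (Suc i)) (z i)" by (simp add: mid_def)
qed

lemma upd_mchain:
  assumes z: "mchain z" and i: "0 < i" "i < RR" and y: "mid (z (i - 1)) (z (Suc i)) y"
  shows "mchain (z(i := y))"
  unfolding mchain_def
proof (intro conjI allI impI)
  show "(z(i := y)) 0 = bot" using z i by (simp add: mchain_def)
  show "(z(i := y)) k = top" if "RR \<le> k" for k using z i that by (simp add: mchain_def)
  fix k assume k: "k < RR"
  consider "k = i - 1" | "k = i" | "k \<noteq> i - 1 \<and> k \<noteq> i" by blast
  then show "covers ((z(i := y)) k) ((z(i := y)) (Suc k))"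
  proof cases
    case 1
    have "i - 1 \<noteq> i" "Suc (i - 1) = i" using i by auto
    then show ?thesis using y 1 by (simp add: mid_def)
  next
    case 2 then show ?thesis using y i by (simp add: mid_def)
  next
    case 3
    then have "Suc k \<noteq> i" using i by auto
    then show ?thesis using 3 mc_cov[OF z k] by simp
  qed
qed

lemma lab_upd_other:
  assumes "0 < i" "k \<noteq> i - 1" "k \<noteq> i"
  shows "lab (z(i := y)) k = lab z k"
proof -
  have "Suc k \<noteq> i" using assms by auto
  then show ?thesis using assms unfolding lab_def by simp
qed

lemma lab_upd:
  assumes z: "mchain z" and i: "0 < i" "i < RR" and y: "mid (z (i - 1)) (z (Suc i)) y"
  shows "lab (z(i := y)) (i - 1) = mm (z (i - 1)) y" "lab (z(i := y)) i = mm y (z (Suc i))"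
proof -
  have c1: "covers (z (i - 1)) y" and c2: "covers y (z (Suc i))" using y by (auto simp: mid_def)
  have ii: "i - 1 \<noteq> i" "Suc (i - 1) = i" using i by auto
  show "lab (z(i := y)) (i - 1) = mm (z (i - 1)) y"
    unfolding lab_def using ii minlab_mm[OF c1] by simp
  show "lab (z(i := y)) i = mm y (z (Suc i))"
    unfolding lab_def using i minlab_mm[OF c2] by simp
qed

lemma lset_upd:
  assumes z: "mchain z" and i: "0 < i" "i < RR" and y: "mid (z (i - 1)) (z (Suc i)) y"
  shows "lset (z(i := y)) = Xs z i \<union> {mm (z (i - 1)) y, mm y (z (Suc i))}"
proof -
  have s: "{..<RR} = ({..<RR} - {i - 1, i}) \<union> {i - 1, i}" using i by auto
  have "lab (z(i := y)) ` ({..<RR} - {i - 1, i}) = Xs z i"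
    unfolding Xs_def using lab_upd_other[OF i(1)] by (intro image_cong) auto
  then show ?thesis unfolding lset_def using lab_upd[OF assms]
    by (subst s) (simp add: image_Un)
qed

lemma lset_self:
  assumes z: "mchain z" and i: "0 < i" "i < RR"
  shows "lset z = Xs z i \<union> {mm (z (i - 1)) (z i), mm (z i) (z (Suc i))}"
  using lset_upd[OF z i uv_props(3)[OF z i]] by simp

lemma Xs_disj:
  assumes z: "mchain z" and i: "0 < i" "i < RR" and a: "a \<in> Xs z i"
  shows "\<not> (a \<le> z (Suc i) \<and> \<not> a \<le> z (i - 1))"
proof -
  obtain k where k: "k < RR" "k \<noteq> i - 1" "k \<noteq> i" "a = lab z k" using a unfolding Xs_def by auto
  consider "k < i - 1" | "i < k" using k by linarith
  then show ?thesis
  proof cases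
    case 1
    then have "a \<le> z (i - 1)" using lab_below[OF z, of k "i - 1"] k i by simp
    then show ?thesis by simp
  next
    case 2
    then have "z (Suc i) \<le> z k" using mc_le[OF z] by simp
    then have "\<not> a \<le> z (Suc i)" using mc_lab(3)[OF z k(1)] k(4) order_trans by blast
    then show ?thesis by simp
  qed
qed

lemma Xs_atoms: "mchain z \<Longrightarrow> Xs z i \<subseteq> atoms"
  unfolding Xs_def using mc_lab(1) by auto

lemma asc_iff:
  assumes z: "mchain z" and i: "0 < i" "i < RR"
  shows "w (lab z (i - 1)) < w (lab z i) \<longleftrightarrow> z i = sup (z (i - 1)) (mm (z (i - 1)) (z (Suc i)))"
proof -
  note uv = uv_props[OF z i]
  have l1: "lab z (i - 1) = mm (z (i - 1)) (z i)" using lab_mm[OF z, of "i - 1"] i by simp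
  have l2: "lab z i = mm (z i) (z (Suc i))" using lab_mm[OF z, of i] i by simp
  show ?thesis
  proof (cases "z i = sup (z (i - 1)) (mm (z (i - 1)) (z (Suc i)))")
    case True
    then show ?thesis using l1 l2 K1(2)[OF uv(1,2)] K3(2)[OF uv(1,2)] by simp
  next
    case False
    then show ?thesis using l1 l2 K2(1,3)[OF uv(1,2) uv(3) False] by simp
  qed
qed

lemma S1:
  assumes z: "mchain z" and i: "0 < i" "i < RR"
    and e: "z i = sup (z (i - 1)) (mm (z (i - 1)) (z (Suc i)))"
  shows "\<exists>y. mid (z (i - 1)) (z (Suc i)) y \<and> y \<noteq> z i \<and> lset (z(i := y)) = lset z"
proof -
  note uv = uv_props[OF z i]
  let ?u = "z (i - 1)" and ?v = "z (Suc i)"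
  let ?ys = "sup ?u (mm (sup ?u (mm ?u ?v)) ?v)"
  note k5 = K5[OF uv(1,2)]
  have "lset (z(i := ?ys)) = Xs z i \<union> {mm (sup ?u (mm ?u ?v)) ?v, mm ?u ?v}"
    using lset_upd[OF z i k5(1)] k5(3) K2(1)[OF uv(1,2) k5(1,2)] by simp
  moreover have "lset z = Xs z i \<union> {mm ?u ?v, mm (sup ?u (mm ?u ?v)) ?v}"
    using lset_self[OF z i] e K1(2)[OF uv(1,2)] by simp
  ultimately show ?thesis using k5(1,2) e by (intro exI[of _ ?ys]) auto
qed

lemma key_insert:
  assumes "finite A" "A \<subseteq> atoms" "a \<in> atoms" "a \<notin> A"
  shows "w ` (insert a A) = insert (w a) (w ` A)" "w a \<notin> w ` A"
proof -
  show "w ` (insert a A) = insert (w a) (w ` A)" by simp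
  show "w a \<notin> w ` A" using assms inj_atoms by blast
qed

lemma S2:
  assumes z: "mchain z" and i: "0 < i" "i < RR"
    and ne: "z i \<noteq> sup (z (i - 1)) (mm (z (i - 1)) (z (Suc i)))"
  shows "lset (z(i := sup (z (i - 1)) (mm (z (i - 1)) (z (Suc i))))) = lset z \<or>
         lex_less (basis_key w (lset (z(i := sup (z (i - 1)) (mm (z (i - 1)) (z (Suc i)))))))
                  (basis_key w (lset z))"
proof -
  note uv = uv_props[OF z i]
  let ?u = "z (i - 1)" and ?v = "z (Suc i)"
  let ?m = "mm ?u ?v" and ?y0 = "sup ?u (mm ?u ?v)"
  let ?m2 = "mm ?y0 ?v" and ?l = "mm ?u (z i)"
  have L1: "lset (z(i := ?y0)) = Xs z i \<union> {?m, ?m2}"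
    using lset_upd[OF z i K1(1)[OF uv(1,2)]] K1(2)[OF uv(1,2)] by simp
  have L2: "lset z = Xs z i \<union> {?l, ?m}"
    using lset_self[OF z i] K2(1)[OF uv(1,2) uv(3) ne] by simp
  show ?thesis
  proof (cases "?m2 = ?l")
    case True then show ?thesis using L1 L2 by auto
  next
    case False
    let ?A = "Xs z i \<union> {?m}"
    have fA: "finite ?A" by simp
    have Aat: "?A \<subseteq> atoms" using Xs_atoms[OF z] m0[OF uv(1,2)] by auto
    have M2: "?m2 \<in> atoms" "?m2 \<le> ?v" "\<not> ?m2 \<le> ?u" using mm_mid(5,6,8)[OF uv(1,2) K1(1)[OF uv(1,2)]] by auto
    have LL: "?l \<in> atoms" "?l \<le> ?v" "\<not> ?l \<le> ?u" using mm_mid(1,4,3)[OF uv(1,2) uv(3)] by auto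
    have "w ?m2 \<noteq> w ?l" using inj_atoms M2(1) LL(1) False by blast
    then have lt: "w ?m2 < w ?l" using K4[OF uv(1,2) uv(3) ne] by simp
    have "?m2 \<notin> ?A" using M2 Xs_disj[OF z i] K3(1)[OF uv(1,2)] by auto
    note k1 = key_insert[OF fA Aat M2(1) this]
    have "?l \<notin> ?A" using LL Xs_disj[OF z i] K2(2)[OF uv(1,2) uv(3) ne] by auto
    note k2 = key_insert[OF fA Aat LL(1) this]
    have e1: "lset (z(i := ?y0)) = insert ?m2 ?A" using L1 by auto
    have e2: "lset z = insert ?l ?A" using L2 by auto
    have "lex_less (sorted_list_of_set (insert (w ?m2) (w ` ?A))) (sorted_list_of_set (insert (w ?l) (w ` ?A)))"
      using swap_lex[of "w ` ?A" "w ?m2" "w ?l"] k1(2) k2(2) lt by simp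
    then show ?thesis unfolding basis_key_def e1 e2 k1(1) k2(1) by simp
  qed
qed

lemma S3:
  assumes z: "mchain z" and i: "0 < i" "i < RR"
    and ne: "z i \<noteq> sup (z (i - 1)) (mm (z (i - 1)) (z (Suc i)))"
    and y: "mid (z (i - 1)) (z (Suc i)) y" "y \<noteq> sup (z (i - 1)) (mm (z (i - 1)) (z (Suc i)))" "y \<noteq> z i"
  shows "lset (z(i := y)) \<noteq> lset z"
proof -
  note uv = uv_props[OF z i]
  let ?u = "z (i - 1)" and ?v = "z (Suc i)"
  let ?m = "mm ?u ?v" and ?l = "mm ?u (z i)"
  have L1: "lset (z(i := y)) = Xs z i \<union> {mm ?u y, ?m}"
    using lset_upd[OF z i y(1)] K2(1)[OF uv(1,2) y(1,2)] by simp
  have L2: "lset z = Xs z i \<union> {?l, ?m}"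
    using lset_self[OF z i] K2(1)[OF uv(1,2) uv(3) ne] by simp
  have LL: "?l \<le> ?v" "\<not> ?l \<le> ?u" using mm_mid(4,3)[OF uv(1,2) uv(3)] by auto
  have "?l \<notin> Xs z i" using LL Xs_disj[OF z i] by auto
  moreover have "?l \<noteq> mm ?u y" using K6[OF uv(1,2) uv(3) y(1)] y(3) by auto
  moreover have "?l \<noteq> ?m" using K2(2)[OF uv(1,2) uv(3) ne] .
  ultimately have "?l \<notin> lset (z(i := y))" using L1 by auto
  moreover have "?l \<in> lset z" using L2 by auto
  ultimately show ?thesis by auto
qed

lemma S4:
  assumes z: "mchain z" and i: "0 < i" "i < RR"
    and ne: "z i \<noteq> sup (z (i - 1)) (mm (z (i - 1)) (z (Suc i)))"
  shows "(word (z(i := sup (z (i - 1)) (mm (z (i - 1)) (z (Suc i))))), word z) \<in> lex less_than"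
proof -
  note uv = uv_props[OF z i]
  let ?y0 = "sup (z (i - 1)) (mm (z (i - 1)) (z (Suc i)))"
  let ?z' = "z(i := ?y0)"
  define j where "j = i - 1"
  have j: "j < RR" "Suc j = i" using i unfolding j_def by auto
  have len: "length (word ?z') = RR" "length (word z) = RR" unfolding word_def by auto
  have tk: "take j (word ?z') = take j (word z)"
    unfolding word_def take_map using j lab_upd_other[OF i(1)]
    by (auto simp: take_upt intro!: map_cong)
  have n1: "word ?z' ! j = w (mm (z (i - 1)) (z (Suc i)))"
    unfolding word_def using j lab_upd(1)[OF z i K1(1)[OF uv(1,2)]] K1(2)[OF uv(1,2)]
    by (simp add: j_def)
  have n2: "word z ! j = w (mm (z (i - 1)) (z i))"
    unfolding word_def using j lab_mm[OF z, of j] by (simp add: j_def)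
  have lt: "w (mm (z (i - 1)) (z (Suc i))) < w (mm (z (i - 1)) (z i))"
    using K2(3)[OF uv(1,2) uv(3) ne] .
  have d1: "word ?z' = take j (word z) @ word ?z' ! j # drop (Suc j) (word ?z')"
    using id_take_nth_drop[of j "word ?z'"] len j tk by simp
  have d2: "word z = take j (word z) @ word z ! j # drop (Suc j) (word z)"
    using id_take_nth_drop[of j "word z"] len j by simp
  have "\<exists>xys x y xs' ys'. word ?z' = xys @ x # xs' \<and> word z = xys @ y # ys' \<and> (x, y) \<in> less_than"
  proof (intro exI conjI)
    show "word ?z' = take j (word z) @ word ?z' ! j # drop (Suc j) (word ?z')" by (rule d1)
    show "word z = take j (word z) @ word z ! j # drop (Suc j) (word z)" by (rule d2)
    show "(word ?z' ! j, word z ! j) \<in> less_than" using n1 n2 lt by simp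
  qed
  then show ?thesis unfolding lex_conv using len by simp
qed

lemma fac_upd:
  assumes z: "mchain z" and i: "0 < i" "i < RR"
  shows "fac (z(i := y)) = insert y (fac z - {z i})"
proof -
  have s: "{1..<RR} = insert i ({1..<RR} - {i})" using i by auto
  have "inj_on z {1..<RR}" using mc_inj[OF z] by (auto simp: inj_on_def)
  then have e1: "z ` ({1..<RR} - {i}) = z ` {1..<RR} - {z i}" using i
    by (simp add: inj_on_image_set_diff)
  have e2: "(z(i := y)) ` ({1..<RR} - {i}) = z ` ({1..<RR} - {i})" by auto
  have "fac (z(i := y)) = (z(i := y)) ` insert i ({1..<RR} - {i})" unfolding fac_def using s by metis
  also have "\<dots> = insert y ((z(i := y)) ` ({1..<RR} - {i}))" by (simp only: image_insert fun_upd_same)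
  also have "\<dots> = insert y (fac z - {z i})" unfolding fac_def by (simp only: e1 e2)
  finally show ?thesis .
qed

lemma mid_notin_fac:
  assumes z: "mchain z" and i: "0 < i" "i < RR"
    and y: "mid (z (i - 1)) (z (Suc i)) y" "y \<noteq> z i"
  shows "y \<notin> fac z"
proof
  assume "y \<in> fac z"
  then obtain j where j: "1 \<le> j" "j < RR" "y = z j" unfolding fac_def by auto
  note uv = uv_props[OF z i]
  have "rk y = i" using mid_rk[OF uv(1,2) y(1)] mc_rk[OF z, of "i - 1"] i by simp
  moreover have "rk y = j" using mc_rk[OF z, of j] j by simp
  ultimately show False using j y(2) by simp
qed

lemma same_ridge:
  assumes z: "mchain z" and z2: "mchain z2" and i: "0 < i" "i < RR"
    and sub: "fac z - {z i} \<subseteq> fac z2"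
  shows "z2 = z(i := z2 i)"
proof
  fix k
  show "z2 k = (z(i := z2 i)) k"
  proof (cases "k = i")
    case True then show ?thesis by simp
  next
    case False
    consider "k = 0" | "k \<ge> RR" | "1 \<le> k \<and> k < RR" by linarith
    then show ?thesis
    proof cases
      case 1 then show ?thesis using z z2 False by (simp add: mchain_def)
    next
      case 2 then show ?thesis using z z2 False by (simp add: mchain_def)
    next
      case 3
      have "z k \<noteq> z i" using mc_inj[OF z, of k i] False 3 i by auto
      then have "z k \<in> fac z - {z i}" using 3 unfolding fac_def by auto
      then have "z k \<in> fac z2" using sub by auto
      then obtain j where j: "1 \<le> j" "j < RR" "z k = z2 j" unfolding fac_def by auto
      have "j = k" using mc_rk[OF z, of k] mc_rk[OF z2, of j] j 3 by simp
      then show ?thesis using j False by simp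
    qed
  qed
qed

end


context GL begin

definition allasc :: "'a set \<Rightarrow> (nat \<Rightarrow> 'a) \<Rightarrow> bool" where
  "allasc G z \<longleftrightarrow> (\<forall>i. 0 < i \<and> i < RR \<and> z i \<notin> G \<longrightarrow> w (lab z (i - 1)) < w (lab z i))"

lemma fixed_agree:
  assumes z: "mchain z" and z2: "mchain z2" and G2: "G \<subseteq> fac z2" and k: "k \<le> RR" and zk: "z k \<in> G"
  shows "z2 k = z k"
proof -
  have "z k \<in> fac z2" using zk G2 by auto
  then obtain j where j: "1 \<le> j" "j < RR" "z k = z2 j" unfolding fac_def by auto
  have "j = k" using mc_rk[OF z k] mc_rk[OF z2, of j] j by simp
  then show ?thesis using j by simp
qed

lemma greedy:
  assumes z: "mchain z" and asc: "allasc G z" and kq: "k < q" "q \<le> RR"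
    and free: "\<And>t. k < t \<Longrightarrow> t < q \<Longrightarrow> z t \<notin> G"
  shows "lab z k = mm (z k) (z q)"
proof -
  have kR: "k < RR" using kq by simp
  have g1: "k + d < q \<Longrightarrow> w (lab z k) \<le> w (lab z (k + d))" for d
  proof (induction d)
    case 0 then show ?case by simp
  next
    case (Suc d)
    have "0 < k + Suc d" "k + Suc d < RR" "z (k + Suc d) \<notin> G" using Suc.prems kq free[of "k + Suc d"] by auto
    then have "w (lab z (k + Suc d - 1)) < w (lab z (k + Suc d))" using asc unfolding allasc_def by blast
    then show ?case using Suc by simp
  qed
  have g2: "k + d \<le> q \<Longrightarrow> a \<le> z (k + d) \<Longrightarrow> \<not> a \<le> z k \<Longrightarrow> a \<in> atoms \<Longrightarrow> w (lab z k) \<le> w a" for d a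
  proof (induction d)
    case 0 then show ?case by simp
  next
    case (Suc d)
    show ?case
    proof (cases "a \<le> z (k + d)")
      case True then show ?thesis using Suc by simp
    next
      case False
      have t: "k + d < RR" using Suc.prems kq by simp
      have "w (lab z (k + d)) \<le> w a" using mc_lab(4)[OF z t] Suc.prems False by simp
      moreover have "w (lab z k) \<le> w (lab z (k + d))" using g1[of d] Suc.prems by simp
      ultimately show ?thesis by simp
    qed
  qed
  have lt: "z k < z q" using mc_lt[OF z kq] .
  show ?thesis
  proof (rule sym, rule mm_eqI[OF lt])
    show "lab z k \<in> atoms" "\<not> lab z k \<le> z k" using mc_lab[OF z kR] by auto
    show "lab z k \<le> z q" using lab_below[OF z kq] .
    fix b assume b: "b \<in> atoms" "b \<le> z q" "\<not> b \<le> z k"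
    show "w (lab z k) \<le> w b" using g2[of "q - k" b] b kq by simp
  qed
qed

lemma uniq:
  assumes z: "mchain z" and z2: "mchain z2" and a1: "allasc G z" and a2: "allasc G z2"
    and G1: "G \<subseteq> fac z" and G2: "G \<subseteq> fac z2"
  shows "z = z2"
proof -
  have "k \<le> RR \<Longrightarrow> z k = z2 k" for k
  proof (induction k)
    case 0 then show ?case using z z2 by (simp add: mchain_def)
  next
    case (Suc k)
    have kR: "k < RR" using Suc.prems by simp
    define q where "q = (LEAST t. k < t \<and> (t = RR \<or> z t \<in> G))"
    have P: "k < q \<and> (q = RR \<or> z q \<in> G)" unfolding q_def by (rule LeastI[of _ RR]) (use kR in simp)
    have qR: "q \<le> RR" unfolding q_def by (rule Least_le) (use kR in simp)
    have nl: "\<And>t. t < q \<Longrightarrow> \<not> (k < t \<and> (t = RR \<or> z t \<in> G))" unfolding q_def by (rule not_less_Least)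
    have free1: "\<And>t. k < t \<Longrightarrow> t < q \<Longrightarrow> z t \<notin> G" using nl by blast
    have free2: "\<And>t. k < t \<Longrightarrow> t < q \<Longrightarrow> z2 t \<notin> G"
    proof
      fix t assume t: "k < t" "t < q" and "z2 t \<in> G"
      then have "z t = z2 t" using fixed_agree[OF z2 z G1, of t] qR by simp
      then show False using free1[OF t] \<open>z2 t \<in> G\<close> by simp
    qed
    have zq: "z q = z2 q"
    proof (cases "q = RR")
      case True then show ?thesis using mc_top[OF z] mc_top[OF z2] by simp
    next
      case False then have "z q \<in> G" using P by simp
      then show ?thesis using fixed_agree[OF z z2 G2 qR] by simp
    qed
    have "lab z k = lab z2 k"
      using greedy[OF z a1 _ qR free1] greedy[OF z2 a2 _ qR free2] P zq Suc by simp
    then show ?case using mc_lab(5)[OF z kR] mc_lab(5)[OF z2 kR] Suc by simp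
  qed
  note eq = this
  show ?thesis
  proof
    fix k show "z k = z2 k"
    proof (cases "k \<le> RR")
      case True then show ?thesis using eq by simp
    next
      case False then show ?thesis using z z2 unfolding mchain_def by simp
    qed
  qed
qed

abbreviation "wrel \<equiv> inv_image (lex less_than) word"

lemma wf_wrel: "wf wrel" by (intro wf_inv_image wf_lex wf_less_than)

lemma not_allasc:
  assumes "\<not> allasc G z"
  obtains i where "0 < i" "i < RR" "z i \<notin> G" "\<not> w (lab z (i - 1)) < w (lab z i)"
  using assms unfolding allasc_def by blast

lemma descent:
  "mchain x \<and> G \<subseteq> fac x \<longrightarrow> (\<exists>z. mchain z \<and> G \<subseteq> fac z \<and> allasc G z \<and>
     (lset z = lset x \<or> lex_less (basis_key w (lset z)) (basis_key w (lset x))))"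
proof (induction x rule: wf_induct[OF wf_wrel])
  case (1 x)
  show ?case
  proof
    assume x: "mchain x \<and> G \<subseteq> fac x"
    show "\<exists>z. mchain z \<and> G \<subseteq> fac z \<and> allasc G z \<and>
     (lset z = lset x \<or> lex_less (basis_key w (lset z)) (basis_key w (lset x)))"
    proof (cases "allasc G x")
      case True then show ?thesis using x by blast
    next
      case False
      then obtain i where i: "0 < i" "i < RR" "x i \<notin> G" "\<not> w (lab x (i - 1)) < w (lab x i)"
        by (rule not_allasc)
      let ?y0 = "sup (x (i - 1)) (mm (x (i - 1)) (x (Suc i)))"
      have xm: "mchain x" and xG: "G \<subseteq> fac x" using x by auto
      have ne: "x i \<noteq> ?y0" using asc_iff[OF xm i(1,2)] i(4) by blast
      note uv = uv_props[OF xm i(1,2)]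
      have mid0: "mid (x (i - 1)) (x (Suc i)) ?y0" using K1(1)[OF uv(1,2)] .
      have mc': "mchain (x(i := ?y0))" using upd_mchain[OF xm i(1,2) mid0] .
      have G': "G \<subseteq> fac (x(i := ?y0))" using fac_upd[OF xm i(1,2)] xG i(3) by blast
      have wr: "(x(i := ?y0), x) \<in> wrel" using S4[OF xm i(1,2) ne] by (simp only: in_inv_image)
      then obtain z where z: "mchain z" "G \<subseteq> fac z" "allasc G z"
        "lset z = lset (x(i := ?y0)) \<or> lex_less (basis_key w (lset z)) (basis_key w (lset (x(i := ?y0))))"
        using 1[rule_format, OF wr] mc' G' by blast
      have "lset (x(i := ?y0)) = lset x \<or> lex_less (basis_key w (lset (x(i := ?y0)))) (basis_key w (lset x))"
        using S2[OF xm i(1,2) ne] .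
      then have "lset z = lset x \<or> lex_less (basis_key w (lset z)) (basis_key w (lset x))"
      proof (elim disjE)
        assume a: "lset (x(i := ?y0)) = lset x"
        then show ?thesis using z(4) by (simp only:)
      next
        assume a: "lex_less (basis_key w (lset (x(i := ?y0)))) (basis_key w (lset x))"
        from z(4) show ?thesis
        proof (elim disjE)
          assume e: "lset z = lset (x(i := ?y0))"
          have "lex_less (basis_key w (lset z)) (basis_key w (lset x))" using a unfolding e .
          then show ?thesis by (rule disjI2)
        next
          assume "lex_less (basis_key w (lset z)) (basis_key w (lset (x(i := ?y0))))"
          then show ?thesis using a lex_less_trans by blast
        qed
      qed
      then show ?thesis using z by blast
    qed
  qed
qed

end


context GL begin

lemma Delta_mem:
  assumes B: "basis B"
  shows "G \<in> Delta w B \<longleftrightarrow> (\<exists>z. mchain z \<and> lset z = B \<and> G \<subseteq> fac z)"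
  unfolding Delta_def using DF_char[OF B] by blast

lemma Delta_memI: "mchain z \<Longrightarrow> G \<subseteq> fac z \<Longrightarrow> G \<in> Delta w (lset z)"
  using Delta_mem[OF lset_basis] by blast

lemma cx_Delta:
  assumes B: "basis B"
  shows "cx_facets (Delta w B) = Delta_facets w B"
proof
  show "cx_facets (Delta w B) \<subseteq> Delta_facets w B"
  proof
    fix F assume F: "F \<in> cx_facets (Delta w B)"
    then have "F \<in> Delta w B" unfolding cx_facets_def by simp
    then obtain F' where F': "F' \<in> Delta_facets w B" "F \<subseteq> F'" unfolding Delta_def by blast
    then have "F' \<in> Delta w B" unfolding Delta_def by blast
    then have "F' = F" using F F'(2) unfolding cx_facets_def by blast
    then show "F \<in> Delta_facets w B" using F'(1) by simp
  qed
next
  show "Delta_facets w B \<subseteq> cx_facets (Delta w B)"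
  proof
    fix F assume F: "F \<in> Delta_facets w B"
    then obtain z where z: "mchain z" "lset z = B" "F = fac z" using DF_char[OF B] by blast
    have "F \<in> Delta w B" using F unfolding Delta_def by blast
    moreover have "G = F" if G: "G \<in> Delta w B" "F \<subseteq> G" for G
    proof -
      obtain z2 where z2: "mchain z2" "lset z2 = B" "G \<subseteq> fac z2" using G(1) Delta_mem[OF B] by blast
      have "fac z \<subseteq> fac z2" using G(2) z2(3) z(3) by simp
      moreover have "card (fac z) = card (fac z2)" using fac_card z(1) z2(1) by simp
      ultimately have "fac z = fac z2" by (simp add: card_subset_eq)
      then show ?thesis using G(2) z2(3) z(3) by simp
    qed
    ultimately show "F \<in> cx_facets (Delta w B)" unfolding cx_facets_def by blast
  qed
qed

lemma two_facets:
  assumes B: "basis B" and F1: "F1 \<in> Delta_facets w B" and F2: "F2 \<in> Delta_facets w B"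
    and ne: "F1 \<noteq> F2" and s1: "Rr \<subseteq> F1" and s2: "Rr \<subseteq> F2"
  shows "card {F \<in> cx_facets (Delta w B). Rr \<subseteq> F} \<noteq> 1"
proof -
  have "{F1, F2} \<subseteq> {F \<in> cx_facets (Delta w B). Rr \<subseteq> F}" using cx_Delta[OF B] assms by auto
  moreover have "finite {F \<in> cx_facets (Delta w B). Rr \<subseteq> F}" by simp
  ultimately have "card {F1, F2} \<le> card {F \<in> cx_facets (Delta w B). Rr \<subseteq> F}" by (rule card_mono[rotated])
  then show ?thesis using ne by simp
qed

theorem main:
  fixes r :: nat and B :: "'a set"
  assumes R: "RR = r + 1" and B: "nbc_basis w B"
  shows "Delta w B \<inter> (\<Union>{Delta w B' | B'. nbc_basis w B' \<and> lex_less (basis_key w B') (basis_key w B)})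
           = boundary r (Delta w B)"
proof
  have Bb: "basis B" using B by (simp add: nbc_basis_def)
  show "Delta w B \<inter> (\<Union>{Delta w B' | B'. nbc_basis w B' \<and> lex_less (basis_key w B') (basis_key w B)})
           \<subseteq> boundary r (Delta w B)"
  proof
    fix G assume "G \<in> Delta w B \<inter> (\<Union>{Delta w B' | B'. nbc_basis w B' \<and> lex_less (basis_key w B') (basis_key w B)})"
    then obtain B' where G: "G \<in> Delta w B" "G \<in> Delta w B'" "nbc_basis w B'"
      "lex_less (basis_key w B') (basis_key w B)" by blast
    obtain x' where x': "mchain x'" "lset x' = B'" "G \<subseteq> fac x'"
      using G(2,3) Delta_mem[of B'] by (auto simp: nbc_basis_def)
    obtain z' where z': "mchain z'" "G \<subseteq> fac z'" "allasc G z'"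
      "lset z' = lset x' \<or> lex_less (basis_key w (lset z')) (basis_key w (lset x'))"
      using descent[of x' G] x' by blast
    have zlt: "lex_less (basis_key w (lset z')) (basis_key w B)"
      using z'(4)
    proof (elim disjE)
      assume "lset z' = lset x'" then show ?thesis using x'(2) G(4) by simp
    next
      assume "lex_less (basis_key w (lset z')) (basis_key w (lset x'))"
      then show ?thesis using x'(2) G(4) lex_less_trans by blast
    qed
    let ?Q = "{z. mchain z \<and> G \<subseteq> fac z \<and> lset z = B}"
    obtain x where xQ: "x \<in> ?Q" using G(1) Delta_mem[OF Bb] by blast
    obtain z where zQ: "z \<in> ?Q" and zmin: "\<And>y. (y, z) \<in> wrel \<Longrightarrow> y \<notin> ?Q"
      by (rule wfE_min[OF wf_wrel xQ]) blast
    have z: "mchain z" "G \<subseteq> fac z" "lset z = B" using zQ by auto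
    have "\<not> allasc G z"
    proof
      assume "allasc G z"
      then have "z = z'" using uniq[OF z(1) z'(1) _ z'(3) z(2) z'(2)] by simp
      then show False using zlt z(3) lex_less_irrefl by simp
    qed
    then obtain i where i: "0 < i" "i < RR" "z i \<notin> G" "\<not> w (lab z (i - 1)) < w (lab z i)"
      by (rule not_allasc)
    let ?y0 = "sup (z (i - 1)) (mm (z (i - 1)) (z (Suc i)))"
    have ne: "z i \<noteq> ?y0" using asc_iff[OF z(1) i(1,2)] i(4) by blast
    note uv = uv_props[OF z(1) i(1,2)]
    let ?Rr = "fac z - {z i}"
    have Rr: "?Rr \<in> Delta w B" using Delta_memI[OF z(1)] z(3) by blast
    have GR: "G \<subseteq> ?Rr" using z(2) i(3) by auto
    have zi: "z i \<in> fac z" using i unfolding fac_def by auto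
    have cR: "card ?Rr + 1 = r" using fac_card[OF z(1)] zi R i by (simp add: card_Diff_singleton)
    have FS: "{F \<in> cx_facets (Delta w B). ?Rr \<subseteq> F} = {fac z}"
    proof
      show "{fac z} \<subseteq> {F \<in> cx_facets (Delta w B). ?Rr \<subseteq> F}"
        using cx_Delta[OF Bb] DF_char[OF Bb] z by auto
    next
      show "{F \<in> cx_facets (Delta w B). ?Rr \<subseteq> F} \<subseteq> {fac z}"
      proof
        fix F assume "F \<in> {F \<in> cx_facets (Delta w B). ?Rr \<subseteq> F}"
        then have F: "F \<in> Delta_facets w B" "?Rr \<subseteq> F" using cx_Delta[OF Bb] by auto
        then obtain z2 where z2: "mchain z2" "lset z2 = B" "F = fac z2" using DF_char[OF Bb] by blast
        have e: "z2 = z(i := z2 i)" using same_ridge[OF z(1) z2(1) i(1,2)] F(2) z2(3) by simp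
        have "i - 1 \<noteq> i" "Suc i \<noteq> i" using i by auto
        then have "z2 (i - 1) = z (i - 1)" "z2 (Suc i) = z (Suc i)" using e by (metis fun_upd_other)+
        then have md: "mid (z (i - 1)) (z (Suc i)) (z2 i)" using uv_props(3)[OF z2(1) i(1,2)] by simp
        show "F \<in> {fac z}"
        proof (cases "z2 i = z i")
          case True then have "z2 = z" using e by simp
          then show ?thesis using z2(3) by simp
        next
          case False
          show ?thesis
          proof (cases "z2 i = ?y0")
            case True
            have "(z2, z) \<in> wrel" using S4[OF z(1) i(1,2) ne] e True by (simp only: in_inv_image)
            moreover have "z2 \<in> ?Q" using z2 GR F(2) by auto
            ultimately show ?thesis using zmin by blast
          next
            case False2: False
            have "lset z2 \<noteq> lset z" using S3[OF z(1) i(1,2) ne md False2 False] e by simp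
            then show ?thesis using z2(2) z(3) by simp
          qed
        qed
      qed
    qed
    have "card {F \<in> cx_facets (Delta w B). ?Rr \<subseteq> F} = 1" using FS by simp
    then show "G \<in> boundary r (Delta w B)" unfolding boundary_def using Rr GR cR by blast
  qed
next
  have Bb: "basis B" using B by (simp add: nbc_basis_def)
  show "boundary r (Delta w B) \<subseteq> Delta w B \<inter> (\<Union>{Delta w B' | B'. nbc_basis w B' \<and> lex_less (basis_key w B') (basis_key w B)})"
  proof
    fix G assume "G \<in> boundary r (Delta w B)"
    then obtain Rr where Rr: "Rr \<in> Delta w B" "G \<subseteq> Rr" "card Rr + 1 = r"
      "card {F \<in> cx_facets (Delta w B). Rr \<subseteq> F} = 1" unfolding boundary_def by blast
    obtain z where z: "mchain z" "lset z = B" "Rr \<subseteq> fac z" using Rr(1) Delta_mem[OF Bb] by blast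
    have cf: "card (fac z) = r" using fac_card[OF z(1)] R by simp
    have "Rr \<noteq> fac z" using cf Rr(3) by auto
    then obtain e where e: "e \<in> fac z" "e \<notin> Rr" using z(3) by blast
    then obtain i where i: "1 \<le> i" "i < RR" "e = z i" unfolding fac_def by auto
    have i0: "0 < i" using i by simp
    have "Rr \<subseteq> fac z - {z i}" using z(3) e i by auto
    moreover have "card (fac z - {z i}) = card Rr" using cf Rr(3) e i by (simp add: card_Diff_singleton)
    ultimately have RrE: "Rr = fac z - {z i}" by (simp add: card_subset_eq)
    note uv = uv_props[OF z(1) i0 i(2)]
    let ?y0 = "sup (z (i - 1)) (mm (z (i - 1)) (z (Suc i)))"
    have other: False if y: "mid (z (i - 1)) (z (Suc i)) y" "y \<noteq> z i" "lset (z(i := y)) = B" for y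
    proof -
      have mc: "mchain (z(i := y))" using upd_mchain[OF z(1) i0 i(2) y(1)] .
      have f: "fac (z(i := y)) = insert y (fac z - {z i})" using fac_upd[OF z(1) i0 i(2)] .
      have "fac (z(i := y)) \<in> Delta_facets w B" using DF_char[OF Bb] mc y(3) by blast
      moreover have "fac z \<in> Delta_facets w B" using DF_char[OF Bb] z by blast
      moreover have "fac (z(i := y)) \<noteq> fac z" using f mid_notin_fac[OF z(1) i0 i(2) y(1,2)] by auto
      moreover have "Rr \<subseteq> fac (z(i := y))" using f RrE by auto
      ultimately show False using two_facets[OF Bb] z(3) Rr(4) by blast
    qed
    have ne: "z i \<noteq> ?y0"
    proof
      assume "z i = ?y0"
      then obtain y where "mid (z (i - 1)) (z (Suc i)) y" "y \<noteq> z i" "lset (z(i := y)) = lset z"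
        using S1[OF z(1) i0 i(2)] by blast
      then show False using other z(2) by blast
    qed
    let ?x = "z(i := ?y0)"
    have mid0: "mid (z (i - 1)) (z (Suc i)) ?y0" using K1(1)[OF uv(1,2)] .
    have mcx: "mchain ?x" using upd_mchain[OF z(1) i0 i(2) mid0] .
    have "lset ?x \<noteq> B" using other[OF mid0] ne by metis
    then have lt: "lex_less (basis_key w (lset ?x)) (basis_key w B)"
      using S2[OF z(1) i0 i(2) ne] z(2) by auto
    have "G \<subseteq> fac ?x" using fac_upd[OF z(1) i0 i(2)] Rr(2) RrE by auto
    then have "G \<in> Delta w (lset ?x)" using Delta_memI[OF mcx] by simp
    moreover have "nbc_basis w (lset ?x)" using lset_nbc[OF mcx] .
    moreover have "G \<in> Delta w B" using Delta_mem[OF Bb] z Rr(2) by blast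
    moreover have "Delta w (lset ?x) \<in> {Delta w B' | B'. nbc_basis w B' \<and> lex_less (basis_key w B') (basis_key w B)}"
      using lt \<open>nbc_basis w (lset ?x)\<close> by blast
    ultimately show "G \<in> Delta w B \<inter> (\<Union>{Delta w B' | B'. nbc_basis w B' \<and> lex_less (basis_key w B') (basis_key w B)})"
      by blast
  qed
qed

end

theorem proposition4p5:
  fixes w :: "'a::finite_lattice_complete \<Rightarrow> nat" and r :: nat and B :: "'a set"
  assumes "geometric_lattice TYPE('a)"
    and "rk (top::'a) = r + 1"
    and "inj_on w atoms"
    and "nbc_basis w B"
    and "\<exists>B'. nbc_basis w B' \<and> lex_less (basis_key w B') (basis_key w B)"
  shows "Delta w B \<inter> (\<Union>{Delta w B' | B'. nbc_basis w B' \<and> lex_less (basis_key w B') (basis_key w B)})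
           = boundary r (Delta w B)"
proof -
  interpret GL w using assms(1,3) by unfold_locales
  show ?thesis using main[of r B] assms(2,4) RR_def by simp
qed


end
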